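(* The pair $(g,\eta)$ forms an exact pencil: with $e=\frac{\partial}{\partial u_{n-1}}$ one has $\mathcal{L}_e g=\eta$ and $\mathcal{L}_e\eta=0$.
   Context: $n\ge2$. $B_n$ acts on $\mathbb{C}^n$ (coordinates $p_1,\dots,p_n$) by permutations and sign changes. $u_k=\sum_{1\le i_1<\dots<i_k\le n}p_{i_1}^2\cdots p_{i_k}^2$ ($k=1,\dots,n$) are coordinates on the orbit space. $g$ is the cometric $g^{ij}(u)=\sum_{k,l}\frac{1-\delta^{kl}}{p_kp_l}\frac{\partial u_i}{\partial p_k}\frac{\partial u_j}{\partial p_l}$ (a polynomial in $u$) and $\eta^{ij}(u)=\frac{\partial g^{ij}}{\partial u_{n-1}}(u)$; $(g,\eta)$ is a flat pencil of contravariant metrics. $\mathcal{L}$ denotes the Lie derivative. *)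

theory Defs
  imports "HOL-Analysis.Analysis"
begin

text \<open>Points of C^n and of the orbit space are represented as functions nat => complex,
  only the coordinates 1..n being relevant.\<close>

definition uB :: "nat \<Rightarrow> (nat \<Rightarrow> complex) \<Rightarrow> nat \<Rightarrow> complex" where
  "uB n p k = (\<Sum>S\<in>{S. S \<subseteq> {1..n} \<and> card S = k}. \<Prod>i\<in>S. (p i)^2)"

definition pdiff :: "((nat \<Rightarrow> complex) \<Rightarrow> complex) \<Rightarrow> nat \<Rightarrow> (nat \<Rightarrow> complex) \<Rightarrow> complex" where
  "pdiff F k x = deriv (\<lambda>t. F (x(k := t))) (x k)"

text \<open>The cometric g^{ij} written in the p-coordinates (on the set where all p_k are nonzero).\<close>
definition gB :: "nat \<Rightarrow> nat \<Rightarrow> nat \<Rightarrow> (nat \<Rightarrow> complex) \<Rightarrow> complex" where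
  "gB n i j p = (\<Sum>k\<in>{1..n}. \<Sum>l\<in>{1..n}.
      (if k = l then 0 else 1) / (p k * p l)
        * pdiff (\<lambda>q. uB n q i) k p * pdiff (\<lambda>q. uB n q j) l p)"

definition is_poly_fun :: "nat \<Rightarrow> ((nat \<Rightarrow> complex) \<Rightarrow> complex) \<Rightarrow> bool" where
  "is_poly_fun n f \<longleftrightarrow> (\<exists>A :: (nat \<Rightarrow> nat) set. \<exists>c :: (nat \<Rightarrow> nat) \<Rightarrow> complex. finite A \<and>
      (\<forall>x. f x = (\<Sum>\<alpha>\<in>A. c \<alpha> * (\<Prod>i\<in>{1..n}. (x i) ^ (\<alpha> i)))))"

definition lie2 :: "nat \<Rightarrow> ((nat \<Rightarrow> complex) \<Rightarrow> nat \<Rightarrow> complex)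
     \<Rightarrow> ((nat \<Rightarrow> complex) \<Rightarrow> nat \<Rightarrow> nat \<Rightarrow> complex) \<Rightarrow> (nat \<Rightarrow> complex) \<Rightarrow> nat \<Rightarrow> nat \<Rightarrow> complex" where
  "lie2 n X T x i j =
     (\<Sum>k\<in>{1..n}. X x k * pdiff (\<lambda>y. T y i j) k x)
   - (\<Sum>k\<in>{1..n}. T x k j * pdiff (\<lambda>y. X y i) k x)
   - (\<Sum>k\<in>{1..n}. T x i k * pdiff (\<lambda>y. X y j) k x)"

definition eB :: "nat \<Rightarrow> (nat \<Rightarrow> complex) \<Rightarrow> nat \<Rightarrow> complex" where
  "eB n x k = (if k = n - 1 then 1 else 0)"

definition etaB :: "nat \<Rightarrow> ((nat \<Rightarrow> complex) \<Rightarrow> nat \<Rightarrow> nat \<Rightarrow> complex) \<Rightarrow> (nat \<Rightarrow> complex) \<Rightarrow> nat \<Rightarrow> nat \<Rightarrow> complex" where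
  "etaB n G x i j = pdiff (\<lambda>y. G y i j) (n - 1) x"

end

theory Submission
  imports Defs
begin


definition esym :: "(nat \<Rightarrow> complex) \<Rightarrow> nat set \<Rightarrow> nat \<Rightarrow> complex" where
  "esym x I a = (\<Sum>S\<in>{S. S \<subseteq> I \<and> card S = a}. \<Prod>i\<in>S. x i)"

lemma fin_subsets: "finite I \<Longrightarrow> finite {S. S \<subseteq> I \<and> P S}"
  by (rule finite_subset[of _ "Pow I"]) auto

lemma esym_0: "finite I \<Longrightarrow> esym x I 0 = 1"
proof -
  assume f: "finite I"
  have "{S. S \<subseteq> I \<and> card S = 0} = {{}}" using f finite_subset by fastforce
  thus ?thesis by (simp add: esym_def)
qed

lemma esym_big: "finite I \<Longrightarrow> card I < a \<Longrightarrow> esym x I a = 0"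
proof -
  assume f: "finite I" "card I < a"
  have E: "{S. S \<subseteq> I \<and> card S = a} = {}"
  proof -
    { fix S assume S: "S \<subseteq> I" "card S = a"
      then have "card S \<le> card I" using card_mono f(1) by blast
      then have False using f(2) S(2) by simp }
    thus ?thesis by blast
  qed
  show ?thesis unfolding esym_def E by simp
qed

lemma esym_insert:
  assumes fI: "finite I" and kI: "k \<notin> I"
  shows "esym x (insert k I) (Suc a) = esym x I (Suc a) + x k * esym x I a"
proof -
  let ?A = "{S. S \<subseteq> I \<and> card S = Suc a}"
  let ?B = "{S. S \<subseteq> I \<and> card S = a}"
  have eq: "{S. S \<subseteq> insert k I \<and> card S = Suc a} = ?A \<union> insert k ` ?B"
  proof (intro equalityI subsetI)
    fix S assume "S \<in> {S. S \<subseteq> insert k I \<and> card S = Suc a}"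
    then have S: "S \<subseteq> insert k I" "card S = Suc a" by auto
    have fS: "finite S" using S(1) fI finite_subset by blast
    show "S \<in> ?A \<union> insert k ` ?B"
    proof (cases "k \<in> S")
      case True
      then have "S = insert k (S - {k})" by auto
      moreover have "S - {k} \<subseteq> I" using S by auto
      moreover have "card (S - {k}) = a" using S True fS by (simp add: card_Diff_singleton)
      ultimately show ?thesis by blast
    next
      case False then show ?thesis using S by auto
    qed
  next
    fix S assume "S \<in> ?A \<union> insert k ` ?B"
    then show "S \<in> {S. S \<subseteq> insert k I \<and> card S = Suc a}"
    proof
      assume "S \<in> ?A" then show ?thesis by auto
    next
      assume "S \<in> insert k ` ?B"
      then obtain T where T: "T \<subseteq> I" "card T = a" "S = insert k T" by auto
      moreover have "finite T" "k \<notin> T" using T fI kI finite_subset by auto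
      ultimately show ?thesis by auto
    qed
  qed
  have disj: "?A \<inter> insert k ` ?B = {}" using kI by auto
  have fin: "finite ?A" "finite (insert k ` ?B)" using fI fin_subsets by auto
  have inj: "inj_on (insert k) ?B" using kI unfolding inj_on_def
    by (metis Diff_insert_absorb in_mono mem_Collect_eq)
  have "esym x (insert k I) (Suc a) = (\<Sum>S\<in>?A. \<Prod>i\<in>S. x i) + (\<Sum>S\<in>insert k ` ?B. \<Prod>i\<in>S. x i)"
    unfolding esym_def eq by (rule sum.union_disjoint) (use fin disj in auto)
  also have "(\<Sum>S\<in>insert k ` ?B. \<Prod>i\<in>S. x i) = (\<Sum>T\<in>?B. \<Prod>i\<in>insert k T. x i)"
    by (simp add: sum.reindex[OF inj])
  also have "\<dots> = (\<Sum>T\<in>?B. x k * (\<Prod>i\<in>T. x i))"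
  proof (rule sum.cong)
    fix T assume "T \<in> ?B"
    then have "finite T" "k \<notin> T" using fI kI finite_subset by auto
    then show "(\<Prod>i\<in>insert k T. x i) = x k * (\<Prod>i\<in>T. x i)" by simp
  qed simp
  also have "\<dots> = x k * esym x I a" by (simp add: esym_def sum_distrib_left)
  finally show ?thesis by (simp add: esym_def)
qed

lemma esym_remove:
  "finite I \<Longrightarrow> k \<in> I \<Longrightarrow> esym x I (Suc a) = esym x (I-{k}) (Suc a) + x k * esym x (I-{k}) a"
  using esym_insert[of "I-{k}" k x a] by (simp add: insert_absorb)

lemma esym_cong: "(\<And>i. i \<in> I \<Longrightarrow> x i = y i) \<Longrightarrow> esym x I a = esym y I a"
  unfolding esym_def by (intro sum.cong refl prod.cong) auto

lemma esym_sum_remove: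
  assumes fI: "finite I"
  shows "(\<Sum>k\<in>I. esym x (I-{k}) a) = (of_nat (card I) - of_nat a) * esym x I a"
proof -
  let ?B = "{S. S \<subseteq> I \<and> card S = a}"
  have finB: "finite ?B" using fI fin_subsets by auto
  have seteq: "\<And>k. {S. S \<subseteq> I-{k} \<and> card S = a} = {S. S \<in> ?B \<and> k \<notin> S}" by auto
  have "(\<Sum>k\<in>I. esym x (I-{k}) a) = (\<Sum>k\<in>I. \<Sum>S\<in>{S. S \<in> ?B \<and> k \<notin> S}. \<Prod>i\<in>S. x i)"
    unfolding esym_def seteq ..
  also have "\<dots> = (\<Sum>S\<in>?B. \<Sum>k\<in>{k. k \<in> I \<and> k \<notin> S}. \<Prod>i\<in>S. x i)"
    by (rule sum.swap_restrict) (use fI finB in auto)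
  also have "\<dots> = (\<Sum>S\<in>?B. of_nat (card I - a) * (\<Prod>i\<in>S. x i))"
  proof (rule sum.cong)
    fix S assume S: "S \<in> ?B"
    have "{k. k \<in> I \<and> k \<notin> S} = I - S" by auto
    moreover have "card (I - S) = card I - a"
    proof -
      have "finite S" "S \<subseteq> I" "card S = a" using S fI finite_subset by auto
      then show ?thesis by (simp add: card_Diff_subset)
    qed
    ultimately show "(\<Sum>k\<in>{k. k \<in> I \<and> k \<notin> S}. \<Prod>i\<in>S. x i) = of_nat (card I - a) * (\<Prod>i\<in>S. x i)"
      by simp
  qed simp
  also have "\<dots> = of_nat (card I - a) * esym x I a" by (simp add: esym_def sum_distrib_left)
  also have "\<dots> = (of_nat (card I) - of_nat a) * esym x I a"
  proof (cases "a \<le> card I")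
    case True then show ?thesis by (simp add: of_nat_diff)
  next
    case False then show ?thesis using esym_big[OF fI] by simp
  qed
  finally show ?thesis .
qed

definition Sd :: "(nat \<Rightarrow> complex) \<Rightarrow> nat set \<Rightarrow> nat \<Rightarrow> nat \<Rightarrow> complex" where
  "Sd x I c d = (\<Sum>k\<in>I. esym x (I-{k}) c * esym x (I-{k}) d)"

lemma Sd_rec:
  assumes fI: "finite I"
  shows "Sd x I (Suc c) d = Sd x I c (Suc d)
     + (of_nat (card I) - of_nat d) * esym x I (Suc c) * esym x I d
     - (of_nat (card I) - of_nat c) * esym x I c * esym x I (Suc d)"
proof -
  have loc: "esym x (I-{k}) (Suc c) * esym x (I-{k}) d - esym x (I-{k}) c * esym x (I-{k}) (Suc d)
     = esym x I (Suc c) * esym x (I-{k}) d - esym x I (Suc d) * esym x (I-{k}) c" if "k \<in> I" for k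
    using esym_remove[OF fI that, of x c] esym_remove[OF fI that, of x d] by (simp add: algebra_simps)
  have "Sd x I (Suc c) d - Sd x I c (Suc d) =
     (\<Sum>k\<in>I. esym x I (Suc c) * esym x (I-{k}) d - esym x I (Suc d) * esym x (I-{k}) c)"
    unfolding Sd_def sum_subtractf[symmetric] by (rule sum.cong) (auto simp: loc)
  also have "\<dots> = esym x I (Suc c) * (\<Sum>k\<in>I. esym x (I-{k}) d) - esym x I (Suc d) * (\<Sum>k\<in>I. esym x (I-{k}) c)"
    by (simp add: sum_subtractf sum_distrib_left)
  also have "\<dots> = esym x I (Suc c) * ((of_nat (card I) - of_nat d) * esym x I d)
       - esym x I (Suc d) * ((of_nat (card I) - of_nat c) * esym x I c)"
    by (simp add: esym_sum_remove[OF fI])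
  finally show ?thesis by (simp add: algebra_simps)
qed

definition Scl :: "complex \<Rightarrow> (nat \<Rightarrow> complex) \<Rightarrow> nat \<Rightarrow> nat \<Rightarrow> complex" where
  "Scl N E c d = (N - of_nat c - of_nat d) * E (c+d)
     + (\<Sum>r<c. (N - of_nat d - of_nat r) * E (c-r) * E (d+r)
              - (N - of_nat c + of_nat r + 1) * E (c-r-1) * E (d+r+1))"

lemma Sd_closed:
  assumes fI: "finite I"
  shows "Sd x I c d = Scl (of_nat (card I)) (esym x I) c d"
proof (induction c arbitrary: d)
  case 0
  have "Sd x I 0 d = (\<Sum>k\<in>I. esym x (I-{k}) d)"
    unfolding Sd_def by (rule sum.cong) (use fI esym_0 in auto)
  then show ?case by (simp add: esym_sum_remove[OF fI] Scl_def)
next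
  case (Suc c)
  let ?N = "of_nat (card I) :: complex" and ?E = "esym x I"
  have sumeq: "(\<Sum>r<c. (?N - of_nat d - of_nat (Suc r)) * ?E (Suc c - Suc r) * ?E (d + Suc r)
              - (?N - of_nat (Suc c) + of_nat (Suc r) + 1) * ?E (Suc c - Suc r - 1) * ?E (d + Suc r + 1))
     = (\<Sum>r<c. (?N - of_nat (Suc d) - of_nat r) * ?E (c-r) * ?E (Suc d+r)
              - (?N - of_nat c + of_nat r + 1) * ?E (c-r-1) * ?E (Suc d+r+1))"
    by (rule sum.cong) (simp_all add: of_nat_Suc algebra_simps)
  define X where "X = (\<Sum>r<c. (?N - of_nat (Suc d) - of_nat r) * ?E (c-r) * ?E (Suc d+r)
              - (?N - of_nat c + of_nat r + 1) * ?E (c-r-1) * ?E (Suc d+r+1))"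
  have L: "Sd x I (Suc c) d = (?N - of_nat c - of_nat (Suc d)) * ?E (Suc (c+d)) + X
     + (?N - of_nat d) * ?E (Suc c) * ?E d - (?N - of_nat c) * ?E c * ?E (Suc d)"
    unfolding Sd_rec[OF fI] Suc Scl_def X_def by simp
  have R: "Scl ?N ?E (Suc c) d = (?N - of_nat (Suc c) - of_nat d) * ?E (Suc (c+d))
     + (((?N - of_nat d) * ?E (Suc c) * ?E d - (?N - of_nat (Suc c) + 1) * ?E c * ?E (Suc d)) + X)"
    unfolding Scl_def sum.lessThan_Suc_shift sumeq X_def by simp
  show ?case unfolding L R by (simp add: of_nat_Suc algebra_simps)
qed



definition EE :: "nat \<Rightarrow> (nat \<Rightarrow> complex) \<Rightarrow> nat \<Rightarrow> complex" where
  "EE n x a = (if a = 0 then 1 else if a \<le> n then x a else 0)"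

definition Hf :: "nat \<Rightarrow> (nat \<Rightarrow> complex) \<Rightarrow> nat \<Rightarrow> nat \<Rightarrow> complex" where
  "Hf n E c d = (if c = 0 then (of_nat n - 1) * (of_nat n - of_nat d) * E d else
     (of_nat n - of_nat c - 1) * (of_nat n - of_nat d) * E c * E d
     - (of_nat n - of_nat c - of_nat d) * E (c+d)
     - (\<Sum>r<c-1. (of_nat n - of_nat d - of_nat r - 1) * E (c-r-1) * E (d+r+1))
     + (\<Sum>r<c. (of_nat n - of_nat c + of_nat r + 1) * E (c-r-1) * E (d+r+1)))"

lemma Hf_eq:
  assumes "E 0 = 1"
  shows "Hf n E c d = (of_nat n - of_nat c) * (of_nat n - of_nat d) * E c * E d - Scl (of_nat n) E c d"
proof (cases c)
  case 0 then show ?thesis using assms by (simp add: Hf_def Scl_def algebra_simps)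
next
  case (Suc c')
  let ?N = "of_nat n :: complex"
  have s1: "(\<Sum>r<Suc c'. (?N - of_nat d - of_nat r) * E (Suc c'-r) * E (d+r)
              - (?N - of_nat (Suc c') + of_nat r + 1) * E (Suc c'-r-1) * E (d+r+1))
     = (\<Sum>r<Suc c'. (?N - of_nat d - of_nat r) * E (Suc c'-r) * E (d+r))
       - (\<Sum>r<Suc c'. (?N - of_nat (Suc c') + of_nat r + 1) * E (Suc c'-r-1) * E (d+r+1))"
    by (rule sum_subtractf)
  have s2: "(\<Sum>r<Suc c'. (?N - of_nat d - of_nat r) * E (Suc c'-r) * E (d+r))
     = (?N - of_nat d) * E (Suc c') * E d + (\<Sum>r<c'. (?N - of_nat d - of_nat r - 1) * E (c'-r) * E (d+r+1))"
    unfolding sum.lessThan_Suc_shift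
    by (simp add: of_nat_Suc algebra_simps)
  have s3: "(\<Sum>r<c'. (?N - of_nat d - of_nat r - 1) * E (c'-r) * E (d+r+1))
     = (\<Sum>r<Suc c' - 1. (?N - of_nat d - of_nat r - 1) * E (Suc c'-r-1) * E (d+r+1))"
    by simp
  define Y where "Y = (\<Sum>r<c'. (?N - of_nat d - of_nat r - 1) * E (c'-r) * E (d+r+1))"
  define Z where "Z = (\<Sum>r<Suc c'. (?N - of_nat (Suc c') + of_nat r + 1) * E (Suc c'-r-1) * E (d+r+1))"
  have H: "Hf n E (Suc c') d = (?N - of_nat (Suc c') - 1) * (?N - of_nat d) * E (Suc c') * E d
     - (?N - of_nat (Suc c') - of_nat d) * E (Suc c' + d) - Y + Z"
    unfolding Hf_def Y_def Z_def by simp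
  have S: "Scl ?N E (Suc c') d = (?N - of_nat (Suc c') - of_nat d) * E (Suc c' + d)
     + ((?N - of_nat d) * E (Suc c') * E d + Y) - Z"
    unfolding Scl_def s1 s2 Y_def Z_def by simp
  show ?thesis unfolding Suc H S by (simp add: of_nat_Suc algebra_simps)
qed

lemma card_I: "card {1..n::nat} = n" by simp

lemma uB_esym: "uB n p a = esym (\<lambda>m. (p m)^2) {1..n} a"
  by (simp add: uB_def esym_def)

lemma EE_uB: "EE n (uB n p) a = esym (\<lambda>m. (p m)^2) {1..n} a"
proof -
  consider "a = 0" | "a \<noteq> 0" "a \<le> n" | "n < a" by linarith
  then show ?thesis
  proof cases
    case 1 then show ?thesis by (simp add: EE_def esym_0)
  next
    case 2 then show ?thesis by (simp add: EE_def uB_esym)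
  next
    case 3 then show ?thesis by (simp add: EE_def esym_big)
  qed
qed

lemma uB_upd:
  assumes k: "k \<in> {1..n}"
  shows "uB n (p(k:=t)) (Suc a) = esym (\<lambda>m. (p m)^2) ({1..n}-{k}) (Suc a)
          + t^2 * esym (\<lambda>m. (p m)^2) ({1..n}-{k}) a"
proof -
  have c: "\<And>b. esym (\<lambda>m. ((p(k:=t)) m)^2) ({1..n}-{k}) b = esym (\<lambda>m. (p m)^2) ({1..n}-{k}) b"
    by (rule esym_cong) auto
  show ?thesis
    unfolding uB_esym esym_remove[OF finite_atLeastAtMost k] c by simp
qed

lemma pdiff_uB:
  assumes k: "k \<in> {1..n}"
  shows "pdiff (\<lambda>q. uB n q (Suc a)) k p = 2 * p k * esym (\<lambda>m. (p m)^2) ({1..n}-{k}) a"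
proof -
  let ?A = "esym (\<lambda>m. (p m)^2) ({1..n}-{k}) (Suc a)"
  let ?B = "esym (\<lambda>m. (p m)^2) ({1..n}-{k}) a"
  have f: "(\<lambda>t. uB n (p(k:=t)) (Suc a)) = (\<lambda>t. ?A + t^2 * ?B)"
    using uB_upd[OF k] by auto
  have "((\<lambda>t. ?A + t^2 * ?B) has_field_derivative (2 * p k * ?B)) (at (p k))"
    by (auto intro!: derivative_eq_intros)
  then show ?thesis unfolding pdiff_def f by (rule DERIV_imp_deriv)
qed

lemma sum_if_neq:
  assumes "finite I" "k \<in> I"
  shows "(\<Sum>l\<in>I. if k = l then 0 else f l) = sum f I - (f k :: complex)"
proof -
  have "(\<Sum>l\<in>I. if k = l then 0 else f l) = (\<Sum>l\<in>I. f l - (if k = l then f l else 0))"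
    by (rule sum.cong) auto
  also have "\<dots> = sum f I - f k" using assms by (simp add: sum_subtractf)
  finally show ?thesis .
qed

lemma gen1: "(\<Sum>k\<in>I. 4 * A k * (C::complex)) = 4 * sum A I * C"
  by (simp add: sum_distrib_right sum_distrib_left)

lemma gen2: "(\<Sum>k\<in>I. 4 * A k * (B k::complex)) = 4 * (\<Sum>k\<in>I. A k * B k)"
  by (simp add: sum_distrib_left mult.assoc)

lemma fsimp: "(a::complex) \<noteq> 0 \<Longrightarrow> b \<noteq> 0 \<Longrightarrow> 1 / (a * b) * (2 * a * X) * (2 * b * Y) = 4 * X * Y"
  by (simp add: field_simps)

lemma gB_formula:
  assumes p: "\<forall>k\<in>{1..n}. p k \<noteq> 0"
  shows "gB n (Suc c) (Suc d) p = 4 * ((of_nat n - of_nat c) * (of_nat n - of_nat d)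
      * esym (\<lambda>m. (p m)^2) {1..n} c * esym (\<lambda>m. (p m)^2) {1..n} d
      - Sd (\<lambda>m. (p m)^2) {1..n} c d)"
proof -
  let ?x = "\<lambda>m. (p m)^2" let ?I = "{1..n}"
  define A where "A = (\<lambda>k. esym ?x (?I - {k}) c)"
  define B where "B = (\<lambda>k. esym ?x (?I - {k}) d)"
  have "gB n (Suc c) (Suc d) p = (\<Sum>k\<in>?I. \<Sum>l\<in>?I. if k = l then 0 else 4 * A k * B l)"
    unfolding gB_def
  proof (intro sum.cong refl)
    fix k l assume kl: "k \<in> ?I" "l \<in> ?I"
    then have "p k \<noteq> 0" "p l \<noteq> 0" using p by auto
    then show "(if k = l then 0 else 1) / (p k * p l) * pdiff (\<lambda>q. uB n q (Suc c)) k p *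
          pdiff (\<lambda>q. uB n q (Suc d)) l p = (if k = l then 0 else 4 * A k * B l)"
      unfolding pdiff_uB[OF kl(1)] pdiff_uB[OF kl(2)]
      by (cases "k = l") (simp_all add: fsimp A_def B_def)
  qed
  also have "\<dots> = (\<Sum>k\<in>?I. 4 * A k * sum B ?I - 4 * A k * B k)"
  proof (rule sum.cong)
    fix k assume k: "k \<in> ?I"
    have "(\<Sum>l\<in>?I. if k = l then 0 else 4 * A k * B l) = (\<Sum>l\<in>?I. 4 * A k * B l) - 4 * A k * B k"
      by (rule sum_if_neq[OF _ k]) simp
    also have "\<dots> = 4 * A k * sum B ?I - 4 * A k * B k" by (simp add: sum_distrib_left)
    finally show "(\<Sum>l\<in>?I. if k = l then 0 else 4 * A k * B l) = 4 * A k * sum B ?I - 4 * A k * B k" .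
  qed simp
  also have "\<dots> = 4 * sum A ?I * sum B ?I - 4 * (\<Sum>k\<in>?I. A k * B k)"
    unfolding sum_subtractf by (simp only: gen1 gen2)
  finally have main: "gB n (Suc c) (Suc d) p = 4 * sum A ?I * sum B ?I - 4 * (\<Sum>k\<in>?I. A k * B k)" .
  have e1: "(\<Sum>k\<in>?I. A k * B k) = Sd ?x ?I c d" unfolding Sd_def A_def B_def ..
  have e2: "sum A ?I = (of_nat n - of_nat c) * esym ?x ?I c"
    unfolding A_def esym_sum_remove[OF finite_atLeastAtMost] card_I ..
  have e3: "sum B ?I = (of_nat n - of_nat d) * esym ?x ?I d"
    unfolding B_def esym_sum_remove[OF finite_atLeastAtMost] card_I ..
  show ?thesis unfolding main e1 e2 e3 by (simp add: algebra_simps)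
qed

lemma main_eq:
  assumes p: "\<forall>k\<in>{1..n}. p k \<noteq> 0" and i: "i \<in> {1..n}" and j: "j \<in> {1..n}"
  shows "4 * Hf n (EE n (uB n p)) (i-1) (j-1) = gB n i j p"
proof -
  define c where "c = i - 1"
  define d where "d = j - 1"
  have cd: "i = Suc c" "j = Suc d" using i j unfolding c_def d_def by auto
  have E: "EE n (uB n p) = esym (\<lambda>m. (p m)^2) {1..n}" using EE_uB by auto
  show ?thesis
    unfolding cd gB_formula[OF p] E
    by (simp add: Hf_eq esym_0 Sd_closed)
qed



definition aff :: "(complex \<Rightarrow> complex) \<Rightarrow> bool" where
  "aff f \<longleftrightarrow> (\<exists>\<alpha> \<beta>. \<forall>t. f t = \<alpha> + \<beta> * t)"

lemma aff_const: "aff (\<lambda>t. a)" unfolding aff_def by (rule exI[of _ a], rule exI[of _ 0]) simp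
lemma aff_id: "aff (\<lambda>t. t)" unfolding aff_def by (rule exI[of _ 0], rule exI[of _ 1]) simp
lemma aff_add: "aff f \<Longrightarrow> aff g \<Longrightarrow> aff (\<lambda>t. f t + g t)"
  unfolding aff_def by (metis (no_types, lifting) add.assoc add.left_commute distrib_right)
lemma aff_diff: "aff f \<Longrightarrow> aff g \<Longrightarrow> aff (\<lambda>t. f t - g t)"
  unfolding aff_def
proof (elim exE)
  fix a b a' b' assume "\<forall>t. f t = a + b * t" "\<forall>t. g t = a' + b' * t"
  then show "\<exists>\<alpha> \<beta>. \<forall>t. f t - g t = \<alpha> + \<beta> * t"
    by (intro exI[of _ "a - a'"] exI[of _ "b - b'"]) (simp add: algebra_simps)
qed
lemma aff_cmult: "aff f \<Longrightarrow> aff (\<lambda>t. c * f t)"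
  unfolding aff_def
proof (elim exE)
  fix a b assume "\<forall>t. f t = a + b * t"
  then show "\<exists>\<alpha> \<beta>. \<forall>t. c * f t = \<alpha> + \<beta> * t"
    by (intro exI[of _ "c * a"] exI[of _ "c * b"]) (simp add: algebra_simps)
qed
lemma aff_multc: "aff f \<Longrightarrow> aff (\<lambda>t. f t * c)"
  using aff_cmult[of f c] by (simp add: mult.commute)
lemma aff_sum: "(\<And>r. r \<in> R \<Longrightarrow> aff (f r)) \<Longrightarrow> aff (\<lambda>t. \<Sum>r\<in>R. f r t)"
proof (induction R rule: infinite_finite_induct)
  case (infinite A) then show ?case by (simp add: aff_const)
next
  case empty then show ?case by (simp add: aff_const)
next
  case (insert x F) then show ?case by (simp add: aff_add)
qed
lemma aff_if: "aff (\<lambda>t. if P then t else v)"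
  by (cases P) (simp_all add: aff_id aff_const)

lemma aff_eval: "aff f \<Longrightarrow> f t = f 0 + (f 1 - f 0) * t"
  unfolding aff_def by auto

lemma EE_upd: "n \<ge> 2 \<Longrightarrow> EE n (y(n-1:=t)) a = (if a = n-1 then t else EE n y a)"
  by (auto simp: EE_def)

lemma aff_Hf:
  assumes n: "n \<ge> 2" and c: "c \<le> n - 1"
  shows "aff (\<lambda>t. Hf n (EE n (y(n-1:=t))) c d)"
proof (cases "c = 0")
  case True
  then show ?thesis unfolding Hf_def EE_upd[OF n]
    by (simp add: aff_cmult aff_if)
next
  case False
  have t1: "aff (\<lambda>t. (of_nat n - of_nat c - 1) * (of_nat n - of_nat d) * (if c = n-1 then t else EE n y c)
              * (if d = n-1 then t else EE n y d))"
  proof (cases "c = n - 1")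
    case True
    then have "(of_nat n - of_nat c - 1 :: complex) = 0" using n by (simp add: of_nat_diff)
    then show ?thesis by (simp add: aff_const)
  next
    case False
    then show ?thesis by (simp add: aff_cmult aff_if)
  qed
  have s1: "aff (\<lambda>t. \<Sum>r<c-1. (of_nat n - of_nat d - of_nat r - 1) * (if c-r-1 = n-1 then t else EE n y (c-r-1))
                 * (if d+r+1 = n-1 then t else EE n y (d+r+1)))"
  proof (rule aff_sum)
    fix r assume "r \<in> {..<c-1}"
    then have ne: "c-r-1 \<noteq> n-1" using c by auto
    show "aff (\<lambda>t. (of_nat n - of_nat d - of_nat r - 1) * (if c-r-1 = n-1 then t else EE n y (c-r-1))
                 * (if d+r+1 = n-1 then t else EE n y (d+r+1)))"
      unfolding if_not_P[OF ne] by (intro aff_cmult aff_multc aff_if)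
  qed
  have s2: "aff (\<lambda>t. \<Sum>r<c. (of_nat n - of_nat c + of_nat r + 1) * (if c-r-1 = n-1 then t else EE n y (c-r-1))
                 * (if d+r+1 = n-1 then t else EE n y (d+r+1)))"
  proof (rule aff_sum)
    fix r assume "r \<in> {..<c}"
    then have ne: "c-r-1 \<noteq> n-1" using c by auto
    show "aff (\<lambda>t. (of_nat n - of_nat c + of_nat r + 1) * (if c-r-1 = n-1 then t else EE n y (c-r-1))
                 * (if d+r+1 = n-1 then t else EE n y (d+r+1)))"
      unfolding if_not_P[OF ne] by (intro aff_cmult aff_multc aff_if)
  qed
  show ?thesis unfolding Hf_def EE_upd[OF n] using False
    by (simp only: if_False) (intro aff_add aff_diff t1 s1 s2 aff_cmult aff_if)
qed



definition mon :: "nat \<Rightarrow> (nat \<Rightarrow> nat) \<Rightarrow> (nat \<Rightarrow> complex) \<Rightarrow> complex" where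
  "mon n \<alpha> x = (\<Prod>i\<in>{1..n}. (x i) ^ (\<alpha> i))"

lemma poly_gen:
  assumes T: "finite T" and f: "\<And>x. f x = (\<Sum>t\<in>T. w t * mon n (\<phi> t) x)"
  shows "is_poly_fun n f"
  unfolding is_poly_fun_def
proof (intro exI conjI allI)
  show "finite (\<phi> ` T)" using T by simp
  fix x
  have "f x = (\<Sum>\<alpha>\<in>\<phi> ` T. \<Sum>t\<in>{t. t \<in> T \<and> \<phi> t = \<alpha>}. w t * mon n (\<phi> t) x)"
    unfolding f by (rule sum.image_gen[OF T])
  also have "\<dots> = (\<Sum>\<alpha>\<in>\<phi> ` T. (\<Sum>t\<in>{t. t \<in> T \<and> \<phi> t = \<alpha>}. w t) * mon n \<alpha> x)"
    by (rule sum.cong) (auto simp: sum_distrib_right)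
  finally show "f x = (\<Sum>\<alpha>\<in>\<phi> ` T. (\<Sum>t\<in>{t. t \<in> T \<and> \<phi> t = \<alpha>}. w t) * (\<Prod>i\<in>{1..n}. x i ^ \<alpha> i))"
    unfolding mon_def .
qed

lemma poly_mon: "is_poly_fun n f \<longleftrightarrow> (\<exists>A c. finite A \<and> (\<forall>x. f x = (\<Sum>\<alpha>\<in>A. c \<alpha> * mon n \<alpha> x)))"
  unfolding is_poly_fun_def mon_def ..

lemma poly_const: "is_poly_fun n (\<lambda>x. k)"
  by (rule poly_gen[of "{0::nat}" _ "\<lambda>_. k" n "\<lambda>_ _. 0"]) (simp_all add: mon_def)

lemma poly_var:
  assumes a: "a \<in> {1..n}"
  shows "is_poly_fun n (\<lambda>x. x a)"
proof (rule poly_gen[of "{0::nat}" _ "\<lambda>_. 1" n "\<lambda>_ i. if i = a then 1 else 0"])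
  fix x
  have "mon n (\<lambda>i. if i = a then 1 else 0) x = (\<Prod>i\<in>{1..n}. if i = a then x i else 1)"
    unfolding mon_def by (rule prod.cong) auto
  also have "\<dots> = x a" using a by simp
  finally show "x a = (\<Sum>t\<in>{0::nat}. 1 * mon n (\<lambda>i. if i = a then 1 else 0) x)" by simp
qed simp

lemma poly_add:
  assumes "is_poly_fun n f" "is_poly_fun n g"
  shows "is_poly_fun n (\<lambda>x. f x + g x)"
proof -
  obtain A c where A: "finite A" "\<And>x. f x = (\<Sum>\<alpha>\<in>A. c \<alpha> * mon n \<alpha> x)"
    using assms(1) unfolding poly_mon by blast
  obtain B d where B: "finite B" "\<And>x. g x = (\<Sum>\<alpha>\<in>B. d \<alpha> * mon n \<alpha> x)"
    using assms(2) unfolding poly_mon by blast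
  show ?thesis
  proof (rule poly_gen[of "A <+> B" _ "case_sum c d" n "case_sum id id"])
    show "finite (A <+> B)" using A B by simp
    fix x show "f x + g x = (\<Sum>t\<in>A <+> B. case_sum c d t * mon n (case_sum id id t) x)"
      unfolding sum.Plus[OF A(1) B(1)] A(2) B(2) by (simp add: comp_def)
  qed
qed

lemma mon_add: "mon n (\<lambda>i. \<alpha> i + \<beta> i) x = mon n \<alpha> x * mon n \<beta> x"
  by (simp add: mon_def power_add prod.distrib)

lemma poly_mult:
  assumes "is_poly_fun n f" "is_poly_fun n g"
  shows "is_poly_fun n (\<lambda>x. f x * g x)"
proof -
  obtain A c where A: "finite A" "\<And>x. f x = (\<Sum>\<alpha>\<in>A. c \<alpha> * mon n \<alpha> x)"
    using assms(1) unfolding poly_mon by blast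
  obtain B d where B: "finite B" "\<And>x. g x = (\<Sum>\<alpha>\<in>B. d \<alpha> * mon n \<alpha> x)"
    using assms(2) unfolding poly_mon by blast
  show ?thesis
  proof (rule poly_gen[of "A \<times> B" _ "\<lambda>(\<alpha>,\<beta>). c \<alpha> * d \<beta>" n "\<lambda>(\<alpha>,\<beta>) i. \<alpha> i + \<beta> i"])
    show "finite (A \<times> B)" using A B by simp
    fix x
    have "f x * g x = (\<Sum>\<alpha>\<in>A. \<Sum>\<beta>\<in>B. (c \<alpha> * mon n \<alpha> x) * (d \<beta> * mon n \<beta> x))"
      unfolding A(2) B(2) by (rule sum_product)
    also have "\<dots> = (\<Sum>(\<alpha>,\<beta>)\<in>A \<times> B. (c \<alpha> * mon n \<alpha> x) * (d \<beta> * mon n \<beta> x))"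
      by (rule sum.cartesian_product)
    also have "\<dots> = (\<Sum>t\<in>A \<times> B. (case t of (\<alpha>,\<beta>) \<Rightarrow> c \<alpha> * d \<beta>) * mon n (case t of (\<alpha>,\<beta>) \<Rightarrow> \<lambda>i. \<alpha> i + \<beta> i) x)"
      by (rule sum.cong) (auto simp: mon_add)
    finally show "f x * g x = (\<Sum>t\<in>A \<times> B. (case t of (\<alpha>,\<beta>) \<Rightarrow> c \<alpha> * d \<beta>) * mon n (case t of (\<alpha>,\<beta>) \<Rightarrow> \<lambda>i. \<alpha> i + \<beta> i) x)" .
  qed
qed

lemma poly_diff:
  assumes "is_poly_fun n f" "is_poly_fun n g"
  shows "is_poly_fun n (\<lambda>x. f x - g x)"
proof -
  have "is_poly_fun n (\<lambda>x. f x + (-1) * g x)"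
    by (intro poly_add poly_mult poly_const assms)
  then show ?thesis by simp
qed

lemma poly_sum:
  "(\<And>r. r \<in> R \<Longrightarrow> is_poly_fun n (f r)) \<Longrightarrow> is_poly_fun n (\<lambda>x. \<Sum>r\<in>R. f r x)"
proof (induction R rule: infinite_finite_induct)
  case (infinite A) then show ?case by (simp add: poly_const)
next
  case empty then show ?case by (simp add: poly_const)
next
  case (insert y F) then show ?case by (simp add: poly_add)
qed

lemma poly_EE: "is_poly_fun n (\<lambda>x. EE n x a)"
proof -
  consider "a = 0" | "a \<noteq> 0" "a \<le> n" | "n < a" by linarith
  then show ?thesis
  proof cases
    case 1 then show ?thesis by (simp add: EE_def poly_const)
  next
    case 2 then show ?thesis by (simp add: EE_def poly_var)
  next
    case 3 then show ?thesis by (simp add: EE_def poly_const)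
  qed
qed

lemma poly_G: "is_poly_fun n (\<lambda>x. 4 * Hf n (EE n x) c d)"
proof (cases "c = 0")
  case True
  then have "\<And>x. Hf n (EE n x) c d = (of_nat n - 1) * (of_nat n - of_nat d) * EE n x d"
    by (simp add: Hf_def)
  then show ?thesis
    by (simp only:) (intro poly_mult poly_const poly_EE)
next
  case False
  show ?thesis unfolding Hf_def using False
    by (simp only: if_False) (intro poly_mult poly_add poly_diff poly_const poly_EE poly_sum)
qed

lemma pdiff_const: "pdiff (\<lambda>y. k) m x = 0"
  by (simp add: pdiff_def)

lemma sum_eB:
  assumes n: "n \<ge> 2"
  shows "(\<Sum>k\<in>{1..n}. eB n x k * f k) = f (n-1)"
proof -
  have "(\<Sum>k\<in>{1..n}. eB n x k * f k) = (\<Sum>k\<in>{1..n}. if k = n-1 then f k else 0)"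
    by (rule sum.cong) (auto simp: eB_def)
  also have "\<dots> = f (n-1)" using n by simp
  finally show ?thesis .
qed

lemma pdiff_eB: "pdiff (\<lambda>y. eB n y i) k x = 0"
  by (simp add: eB_def pdiff_const)

theorem mainTheorem14:
  fixes n :: nat
  assumes "n \<ge> 2"
  shows "\<exists>G :: (nat \<Rightarrow> complex) \<Rightarrow> nat \<Rightarrow> nat \<Rightarrow> complex.
     (\<forall>i\<in>{1..n}. \<forall>j\<in>{1..n}. is_poly_fun n (\<lambda>x. G x i j)) \<and>
     (\<forall>p. (\<forall>k\<in>{1..n}. p k \<noteq> 0) \<longrightarrow>
        (\<forall>i\<in>{1..n}. \<forall>j\<in>{1..n}. G (uB n p) i j = gB n i j p)) \<and>
     (\<forall>x. \<forall>i\<in>{1..n}. \<forall>j\<in>{1..n}. lie2 n (eB n) G x i j = etaB n G x i j) \<and>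
     (\<forall>x. \<forall>i\<in>{1..n}. \<forall>j\<in>{1..n}. lie2 n (eB n) (etaB n G) x i j = 0)"
proof -
  have n: "n \<ge> 2" by fact
  define G where "G = (\<lambda>x i j. 4 * Hf n (EE n x) (i-1) (j-1))"
  have P1: "\<forall>i\<in>{1..n}. \<forall>j\<in>{1..n}. is_poly_fun n (\<lambda>x. G x i j)"
    unfolding G_def by (intro ballI poly_G)
  have P2: "\<forall>p. (\<forall>k\<in>{1..n}. p k \<noteq> 0) \<longrightarrow>
        (\<forall>i\<in>{1..n}. \<forall>j\<in>{1..n}. G (uB n p) i j = gB n i j p)"
    unfolding G_def
  proof (intro allI impI ballI)
    fix p :: "nat \<Rightarrow> complex" and i j
    assume "\<forall>k\<in>{1..n}. p k \<noteq> 0" "i \<in> {1..n}" "j \<in> {1..n}"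
    then show "4 * Hf n (EE n (uB n p)) (i-1) (j-1) = gB n i j p" by (rule main_eq)
  qed
  have P3: "lie2 n (eB n) T x i j = pdiff (\<lambda>y. T y i j) (n-1) x" for T x i j
    unfolding lie2_def sum_eB[OF n] pdiff_eB by simp
  have affG: "aff (\<lambda>t. G (y(n-1:=t)) i j)" if i: "i \<in> {1..n}" for y i j
    unfolding G_def by (rule aff_cmult, rule aff_Hf[OF n]) (use i in auto)
  define \<beta> where "\<beta> = (\<lambda>i j y. G (y(n-1:=1)) i j - G (y(n-1:=0)) i j)"
  have eta: "etaB n G y i j = \<beta> i j y" if i: "i \<in> {1..n}" for y i j
  proof -
    have eqn: "G (y(n-1:=t)) i j = G (y(n-1:=0)) i j + \<beta> i j y * t" for t
    proof -
      have ev: "(\<lambda>t. G (y(n-1:=t)) i j) t = (\<lambda>t. G (y(n-1:=t)) i j) 0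
          + ((\<lambda>t. G (y(n-1:=t)) i j) 1 - (\<lambda>t. G (y(n-1:=t)) i j) 0) * t"
        by (rule aff_eval[OF affG[OF i]])
      then show ?thesis unfolding \<beta>_def by (simp only:)
    qed
    have f: "(\<lambda>t. G (y(n-1:=t)) i j) = (\<lambda>t. G (y(n-1:=0)) i j + \<beta> i j y * t)"
      by (rule ext) (rule eqn)
    have "((\<lambda>t. G (y(n-1:=0)) i j + \<beta> i j y * t) has_field_derivative \<beta> i j y) (at (y (n-1)))"
      by (auto intro!: derivative_eq_intros)
    then show ?thesis unfolding etaB_def pdiff_def f by (rule DERIV_imp_deriv)
  qed
  have P4: "lie2 n (eB n) (etaB n G) x i j = 0" if i: "i \<in> {1..n}" for x i j
  proof -
    have "(\<lambda>y. etaB n G y i j) = \<beta> i j" using eta[OF i] by auto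
    moreover have "pdiff (\<beta> i j) (n-1) x = 0"
      unfolding pdiff_def \<beta>_def by simp
    ultimately show ?thesis unfolding P3 by simp
  qed
  have P3': "\<forall>x. \<forall>i\<in>{1..n}. \<forall>j\<in>{1..n}. lie2 n (eB n) G x i j = etaB n G x i j"
    unfolding etaB_def P3 by blast
  have P4': "\<forall>x. \<forall>i\<in>{1..n}. \<forall>j\<in>{1..n}. lie2 n (eB n) (etaB n G) x i j = 0"
    using P4 by blast
  show ?thesis
    by (rule exI[of _ G]) (intro conjI P1 P2 P3' P4')
qed

end
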